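(* Let $(X,d,\kappa)$ be a digital metric space with more than one point. Suppose there exist $x_0,y_0 \in X$ such that $d(x_0,y_0) = \min\{d(x,y) : x,y \in X,\ d(x,y) > 0\}$. Then there is no function $T: X \to X$ that is both onto and a digital expansive mapping.
   Context: A digital metric space is a triple $(X,d,\kappa)$ with $X\subset\mathbb{Z}^n$, $\kappa$ an adjacency relation on $X$, and $d$ a metric on $X$. A function $T: X \to X$ is a digital expansive mapping if there exists $k > 1$ such that $d(T(x),T(y)) \ge k\,d(x,y)$ for all $x,y \in X$. *)

theory Defs
  imports "HOL-Analysis.Analysis"
begin

text \<open>Points of Z^n are modelled as int ^ 'n (the dimension n is the cardinality of
the finite index type 'n).\<close>

definition adjacency_on :: "(int ^ 'n) set \<Rightarrow> (int ^ 'n \<Rightarrow> int ^ 'n \<Rightarrow> bool) \<Rightarrow> bool" where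
  "adjacency_on X \<kappa> \<longleftrightarrow>
     (\<forall>x y. \<kappa> x y \<longrightarrow> x \<in> X \<and> y \<in> X) \<and>
     (\<forall>x\<in>X. \<not> \<kappa> x x) \<and>
     (\<forall>x\<in>X. \<forall>y\<in>X. \<kappa> x y \<longrightarrow> \<kappa> y x)"

definition metric_on :: "'a set \<Rightarrow> ('a \<Rightarrow> 'a \<Rightarrow> real) \<Rightarrow> bool" where
  "metric_on X d \<longleftrightarrow>
     (\<forall>x\<in>X. \<forall>y\<in>X. 0 \<le> d x y) \<and>
     (\<forall>x\<in>X. \<forall>y\<in>X. d x y = 0 \<longleftrightarrow> x = y) \<and>
     (\<forall>x\<in>X. \<forall>y\<in>X. d x y = d y x) \<and>
     (\<forall>x\<in>X. \<forall>y\<in>X. \<forall>z\<in>X. d x z \<le> d x y + d y z)"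

definition digital_metric_space ::
  "(int ^ 'n) set \<Rightarrow> (int ^ 'n \<Rightarrow> int ^ 'n \<Rightarrow> real) \<Rightarrow> (int ^ 'n \<Rightarrow> int ^ 'n \<Rightarrow> bool) \<Rightarrow> bool" where
  "digital_metric_space X d \<kappa> \<longleftrightarrow> metric_on X d \<and> adjacency_on X \<kappa>"

definition digital_expansive ::
  "'a set \<Rightarrow> ('a \<Rightarrow> 'a \<Rightarrow> real) \<Rightarrow> ('a \<Rightarrow> 'a) \<Rightarrow> bool" where
  "digital_expansive X d T \<longleftrightarrow>
     T ` X \<subseteq> X \<and> (\<exists>k::real. k > 1 \<and> (\<forall>x\<in>X. \<forall>y\<in>X. d (T x) (T y) \<ge> k * d x y))"

end

theory Submission
  imports Defs
begin

theorem mainTheorem9: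
  fixes X :: "(int ^ 'n) set"
    and d :: "int ^ 'n \<Rightarrow> int ^ 'n \<Rightarrow> real"
    and \<kappa> :: "int ^ 'n \<Rightarrow> int ^ 'n \<Rightarrow> bool"
    and x0 y0 :: "int ^ 'n"
  assumes "digital_metric_space X d \<kappa>"
    and "\<exists>x\<in>X. \<exists>y\<in>X. x \<noteq> y"
    and "x0 \<in> X" and "y0 \<in> X"
    and "d x0 y0 > 0"
    and "\<forall>x\<in>X. \<forall>y\<in>X. d x y > 0 \<longrightarrow> d x0 y0 \<le> d x y"
  shows "\<not> (\<exists>T. T ` X = X \<and> digital_expansive X d T)"
proof
  assume "\<exists>T. T ` X = X \<and> digital_expansive X d T"
  then obtain T k where TX: "T ` X = X" and k1: "k > 1"
    and ex: "\<forall>x\<in>X. \<forall>y\<in>X. d (T x) (T y) \<ge> k * d x y"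
    unfolding digital_expansive_def by blast
  have met: "metric_on X d" using assms(1) unfolding digital_metric_space_def by (rule conjunct1)
  have x0i: "x0 \<in> T ` X" using TX assms(3) by simp
  then obtain a where a: "a \<in> X" "x0 = T a" by (rule imageE)
  have y0i: "y0 \<in> T ` X" using TX assms(4) by simp
  then obtain b where b: "b \<in> X" "y0 = T b" by (rule imageE)
  have m1: "\<forall>x\<in>X. \<forall>y\<in>X. 0 \<le> d x y" and m2: "\<forall>x\<in>X. \<forall>y\<in>X. d x y = 0 \<longleftrightarrow> x = y"
    using met unfolding metric_on_def by auto
  have "a \<noteq> b"
  proof
    assume "a = b"
    then have "x0 = y0" using a(2) b(2) by simp
    then have "d x0 y0 = 0" using m2 assms(3) by simp
    then show False using assms(5) by simp
  qed
  have dab0: "d a b \<ge> 0" using m1 a(1) b(1) by simp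
  have "d a b \<noteq> 0" using m2 a(1) b(1) \<open>a \<noteq> b\<close> by simp
  then have dab: "d a b > 0" using dab0 by linarith
  have le1: "d x0 y0 \<le> d a b" using assms(6) a(1) b(1) dab by simp
  have le2: "k * d a b \<le> d (T a) (T b)" using ex a(1) b(1) by simp
  then have le3: "k * d a b \<le> d x0 y0" using a(2) b(2) by simp
  have "(k - 1) * d a b > 0" using k1 dab by simp
  then show False using le1 le3 by (simp add: algebra_simps)
qed

end
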